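(* Let $0<\lambda_1<\cdots<\lambda_n$ be real numbers and let $r>0$. Then the $n\times n$ matrices \[ \left[\frac{1}{\mathcal A(\lambda_i,\lambda_j)^r}\right],\quad \left[H(\lambda_i,\lambda_j)^r\right],\quad \left[\frac{1}{\mathcal H_\nu(\lambda_i,\lambda_j)^r}\right]\ (0\leq\nu\leq 1,\ \nu\neq\tfrac12),\quad \left[\frac{1}{\mathcal B_\alpha(\lambda_i,\lambda_j)^r}\right]\ (0<\alpha<\infty) \] are totally positive, and the matrices \[ \left[\frac{1}{\mathcal H_{1/2}(\lambda_i,\lambda_j)^r}\right]\ \left(=\left[\frac{1}{\mathcal B_0(\lambda_i,\lambda_j)^r}\right]\right)\quad\text{and}\quad \left[\frac{1}{\mathcal B_\infty(\lambda_i,\lambda_j)^r}\right] \] are totally nonnegative.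
   Context: For positive reals $a,b$: the arithmetic mean $\mathcal A(a,b)=\frac{a+b}{2}$; the harmonic mean $H(a,b)=\frac{2ab}{a+b}$; the Heinz mean $\mathcal H_\nu(a,b)=\frac{a^\nu b^{1-\nu}+a^{1-\nu}b^\nu}{2}$ for $0\leq\nu\leq1$; the binomial mean $\mathcal B_\alpha(a,b)=\left(\frac{a^\alpha+b^\alpha}{2}\right)^{1/\alpha}$ for real $\alpha\neq0$, with $\mathcal B_0(a,b)=\sqrt{ab}$ and $\mathcal B_\infty(a,b)=\max(a,b)$. All matrices are indexed by $i,j=1,\ldots,n$. A matrix is totally positive (resp. totally nonnegative) if all its minors are positive (resp. nonnegative). *)

theory Defs
  imports Complex_Main "Jordan_Normal_Form.DL_Submatrix" "Jordan_Normal_Form.Determinant"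
begin

definition arith_mean :: "real \<Rightarrow> real \<Rightarrow> real" where
  "arith_mean a b = (a + b) / 2"

definition harm_mean :: "real \<Rightarrow> real \<Rightarrow> real" where
  "harm_mean a b = 2 * a * b / (a + b)"

definition heinz_mean :: "real \<Rightarrow> real \<Rightarrow> real \<Rightarrow> real" where
  "heinz_mean \<nu> a b = (a powr \<nu> * b powr (1 - \<nu>) + a powr (1 - \<nu>) * b powr \<nu>) / 2"

text \<open>Binomial mean for real alpha different from 0; B_0 and B_infinity are separate.\<close>
definition binom_mean :: "real \<Rightarrow> real \<Rightarrow> real \<Rightarrow> real" where
  "binom_mean \<alpha> a b = ((a powr \<alpha> + b powr \<alpha>) / 2) powr (1 / \<alpha>)"

definition binom_mean0 :: "real \<Rightarrow> real \<Rightarrow> real" where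
  "binom_mean0 a b = sqrt (a * b)"

definition binom_mean_inf :: "real \<Rightarrow> real \<Rightarrow> real" where
  "binom_mean_inf a b = max a b"

definition totally_positive :: "real mat \<Rightarrow> bool" where
  "totally_positive A \<longleftrightarrow>
     (\<forall>I J. I \<subseteq> {..<dim_row A} \<and> J \<subseteq> {..<dim_col A} \<and> I \<noteq> {} \<and> card I = card J
        \<longrightarrow> det (submatrix A I J) > 0)"

definition totally_nonnegative :: "real mat \<Rightarrow> bool" where
  "totally_nonnegative A \<longleftrightarrow>
     (\<forall>I J. I \<subseteq> {..<dim_row A} \<and> J \<subseteq> {..<dim_col A} \<and> I \<noteq> {} \<and> card I = card J
        \<longrightarrow> det (submatrix A I J) \<ge> 0)"

end

theory Submission
  imports Defs
begin


lemma det_tendsto: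
  fixes f :: "'b \<Rightarrow> nat \<Rightarrow> nat \<Rightarrow> real"
  assumes "\<And>i j. i < m \<Longrightarrow> j < m \<Longrightarrow> ((\<lambda>t. f t i j) \<longlongrightarrow> g i j) F"
  shows "((\<lambda>t. det (mat m m (\<lambda>(i,j). f t i j))) \<longlongrightarrow> det (mat m m (\<lambda>(i,j). g i j))) F"
proof -
  have e: "det (mat m m (\<lambda>(i,j). h i j)) = (\<Sum>p | p permutes {0..<m}. of_int (sign p) * (\<Prod>i = 0..<m. h i (p i)))"
    for h :: "nat \<Rightarrow> nat \<Rightarrow> real"
  proof -
    have "det (mat m m (\<lambda>(i,j). h i j)) = (\<Sum>p | p permutes {0..<m}. of_int (sign p) * (\<Prod>i = 0..<m. (mat m m (\<lambda>(i,j). h i j)) $$ (i, p i)))"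
      by (rule det_def') simp
    also have "\<dots> = (\<Sum>p | p permutes {0..<m}. of_int (sign p) * (\<Prod>i = 0..<m. h i (p i)))"
    proof (intro sum.cong refl arg_cong2[where f="(*)"] prod.cong)
      fix p i assume "p \<in> {p. p permutes {0..<m}}" "i \<in> {0..<m}"
      then have "p i < m" by (auto dest: permutes_in_image)
      then show "mat m m (\<lambda>(i,j). h i j) $$ (i, p i) = h i (p i)" using \<open>i \<in> {0..<m}\<close> by simp
    qed
    finally show ?thesis .
  qed
  show ?thesis unfolding e
  proof (intro tendsto_intros)
    fix p i assume "p \<in> {p. p permutes {0..<m}}" "i \<in> {0..<m}"
    then have "p i < m" by (auto dest: permutes_in_image)
    then show "((\<lambda>t. f t i (p i)) \<longlongrightarrow> g i (p i)) F" using assms \<open>i \<in> {0..<m}\<close> by simp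
  qed
qed

lemma zeros_count:
  fixes m :: nat
    and s :: real and y c z :: "nat \<Rightarrow> real"
  assumes "0 < s" "inj_on y {..<m}" "\<forall>j<m. 0 < y j" "\<exists>j<m. c j \<noteq> 0"
     "\<forall>i<m. 0 < z i" "\<forall>i j. i < j \<longrightarrow> j < m \<longrightarrow> z i < z j"
  shows "\<exists>i<m. (\<Sum>j<m. c j * (z i + y j) powr (-s)) \<noteq> 0"
  using assms
proof (induction m arbitrary: s y c z)
  case 0
  then show ?case by simp
next
  case (Suc m)
  show ?case
  proof (rule ccontr)
    assume H0: "\<not> ?case"
    then have H: "\<And>i. i < Suc m \<Longrightarrow> (\<Sum>j<Suc m. c j * (z i + y j) powr (-s)) = 0" by auto
    show False
    proof (cases "\<forall>j. j < m \<longrightarrow> c (Suc j) = 0")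
      case True
      then have c0: "c 0 \<noteq> 0" using Suc.prems(4) by (metis less_Suc_eq_0_disj)
      have "(\<Sum>j<Suc m. c j * (z 0 + y j) powr (-s)) = c 0 * (z 0 + y 0) powr (-s)"
        unfolding sum.lessThan_Suc_shift using True by simp
      moreover have "z 0 + y 0 > 0" using Suc.prems(3,5) by (metis add_pos_pos zero_less_Suc)
      then have "c 0 * (z 0 + y 0) powr (-s) \<noteq> 0" using c0 by simp
      ultimately show False using H[of 0] by simp
    next
      case False
      then obtain j0 where j0: "j0 < m" "c (Suc j0) \<noteq> 0" by auto
      define G where "G x = (\<Sum>j<Suc m. c j * ((x + y 0) powr s * (x + y j) powr (-s)))" for x
      define G' where "G' x = (\<Sum>j<Suc m. c j * (s * (x + y 0) powr (s - 1) * (y j - y 0) * (x + y j) powr (-s-1)))" for x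
      have ypos: "\<And>j. j < Suc m \<Longrightarrow> 0 < y j" using Suc.prems by auto
      have dG: "(G has_real_derivative G' x) (at x)" if x: "x > 0" for x
        unfolding G_def G'_def
      proof (intro DERIV_sum DERIV_cmult)
        fix j assume j: "j \<in> {..<Suc m}"
        have p0: "x + y 0 > 0" "x + y j > 0" using x ypos[of 0] ypos[of j] j by auto
        have d1: "((\<lambda>x. (x + y 0) powr s) has_real_derivative s * (x + y 0) powr (s - 1)) (at x)"
          using DERIV_fun_powr[of "\<lambda>x. x + y 0" 1 x s] p0 by (auto intro!: derivative_eq_intros)
        have d2: "((\<lambda>x. (x + y j) powr (-s)) has_real_derivative (-s) * (x + y j) powr (-s - 1)) (at x)"
          using DERIV_fun_powr[of "\<lambda>x. x + y j" 1 x "-s"] p0 by (auto intro!: derivative_eq_intros)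
        have eq: "s * (x + y 0) powr (s - 1) * (x + y j) powr (-s) + ((-s) * (x + y j) powr (-s - 1)) * (x + y 0) powr s
            = s * (x + y 0) powr (s - 1) * (y j - y 0) * (x + y j) powr (-s-1)"
        proof -
          have a: "(x + y 0) powr s = (x + y 0) powr (s - 1) * (x + y 0)"
            using p0 by (simp add: powr_diff)
          have b: "(x + y j) powr (-s) = (x + y j) powr (-s - 1) * (x + y j)"
            using p0 by (simp add: powr_diff)
          show ?thesis unfolding a b by (simp add: algebra_simps)
        qed
        show "((\<lambda>x. (x + y 0) powr s * (x + y j) powr - s) has_real_derivative
            s * (x + y 0) powr (s - 1) * (y j - y 0) * (x + y j) powr (- s - 1)) (at x)"
          by (subst eq[symmetric]) (rule DERIV_mult[OF d1 d2])
      qed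
      have Gz: "G (z i) = 0" if i: "i < Suc m" for i
      proof -
        have "G (z i) = (z i + y 0) powr s * (\<Sum>j<Suc m. c j * (z i + y j) powr (-s))"
          unfolding G_def sum_distrib_left by (simp add: algebra_simps)
        then show ?thesis using H[OF i] by simp
      qed
      have "\<forall>i. \<exists>w. i < m \<longrightarrow> z i < w \<and> w < z (Suc i) \<and> G' w = 0"
      proof
        fix i
        show "\<exists>w. i < m \<longrightarrow> z i < w \<and> w < z (Suc i) \<and> G' w = 0"
        proof (cases "i < m")
          case False then show ?thesis by simp
        next
          case True
          have zi: "0 < z i" "z i < z (Suc i)" using Suc.prems True by auto
          have cont: "continuous_on {z i..z (Suc i)} G"
          proof (rule continuous_at_imp_continuous_on, intro ballI)
            fix x assume "x \<in> {z i..z (Suc i)}"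
            then have "x > 0" using zi by auto
            then show "isCont G x" using dG DERIV_isCont by blast
          qed
          have dif: "G differentiable (at x)" if "z i < x" "x < z (Suc i)" for x
            using dG[of x] zi that unfolding real_differentiable_def by auto
          obtain w where w: "z i < w" "w < z (Suc i)" "(G has_real_derivative 0) (at w)"
            using Rolle[OF zi(2) _ cont dif] Gz True by auto
          have "G' w = 0" using DERIV_unique[OF dG w(3)] w zi by simp
          then show ?thesis using w by auto
        qed
      qed
      then obtain w where w: "\<And>i. i < m \<Longrightarrow> z i < w i \<and> w i < z (Suc i) \<and> G' (w i) = 0"
        by metis
      define c' where "c' j = c (Suc j) * (y (Suc j) - y 0)" for j
      have G'eq: "G' x = s * (x + y 0) powr (s - 1) * (\<Sum>j<m. c' j * (x + (y \<circ> Suc) j) powr (-s-1))" for x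
        unfolding G'_def c'_def sum.lessThan_Suc_shift sum_distrib_left
        by (simp add: algebra_simps)
      have e1: "-(s+1) = -s-1" by simp
      have inj: "inj_on y {..<Suc m}" using Suc.prems by simp
      have "\<exists>i<m. (\<Sum>j<m. c' j * (w i + (y \<circ> Suc) j) powr (-(s+1))) \<noteq> 0"
      proof (rule Suc.IH)
        show "0 < s + 1" using Suc.prems by simp
        show "inj_on (y \<circ> Suc) {..<m}" using inj unfolding inj_on_def by auto
        show "\<forall>j<m. 0 < (y \<circ> Suc) j" using Suc.prems by auto
        have "y (Suc j0) \<noteq> y 0" using inj j0 unfolding inj_on_def by fastforce
        then show "\<exists>j<m. c' j \<noteq> 0" using j0 unfolding c'_def by auto
        show "\<forall>i<m. 0 < w i" using w Suc.prems by (meson less_SucI order.strict_trans)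
        show "\<forall>i j. i < j \<longrightarrow> j < m \<longrightarrow> w i < w j"
        proof (intro allI impI)
          fix i j assume ij: "i < j" "j < m"
          have "w i < z (Suc i)" using w ij by auto
          also have "z (Suc i) \<le> z j" using Suc.prems ij
            by (metis Suc_lessI less_imp_le_nat order.order_iff_strict less_SucI)
          also have "z j < w j" using w ij by auto
          finally show "w i < w j" .
        qed
      qed
      then obtain i where i: "i < m" "(\<Sum>j<m. c' j * (w i + (y \<circ> Suc) j) powr (-s-1)) \<noteq> 0"
        using e1 by metis
      have "w i + y 0 > 0" using w[OF i(1)] Suc.prems i(1) by (meson less_SucI order.strict_trans add_pos_pos zero_less_Suc)
      then have "s * (w i + y 0) powr (s - 1) \<noteq> 0" using Suc.prems by simp
      then have "G' (w i) \<noteq> 0" using G'eq i(2) by simp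
      then show False using w[OF i(1)] by simp
    qed
  qed
qed



definition incpos :: "nat \<Rightarrow> (nat \<Rightarrow> real) \<Rightarrow> bool" where
  "incpos m x \<longleftrightarrow> (\<forall>i<m. 0 < x i) \<and> (\<forall>i j. i < j \<longrightarrow> j < m \<longrightarrow> x i < x j)"

lemma kernel_nz:
  assumes s: "0 < s" and x: "incpos m x" and y: "incpos m y"
  shows "det (mat m m (\<lambda>(i,j). (x i + y j) powr (-s))) \<noteq> 0"
proof
  let ?A = "mat m m (\<lambda>(i,j). (x i + y j) powr (-s))"
  assume "det ?A = 0"
  then obtain v where v: "v \<in> carrier_vec m" "v \<noteq> 0\<^sub>v m" "?A *\<^sub>v v = 0\<^sub>v m"
    using det_0_iff_vec_prod_zero[of ?A m] by auto
  have "\<exists>j<m. v $ j \<noteq> 0"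
  proof (rule ccontr)
    assume "\<not> ?thesis"
    then have "v = 0\<^sub>v m" using v(1) by (intro eq_vecI) auto
    then show False using v(2) by simp
  qed
  moreover have inj: "inj_on y {..<m}"
    using y unfolding incpos_def inj_on_def by (metis lessThan_iff linorder_neqE_nat order_less_irrefl)
  ultimately obtain i where i: "i < m" "(\<Sum>j<m. v $ j * (x i + y j) powr (-s)) \<noteq> 0"
    using zeros_count[of s y m "\<lambda>j. v $ j" x] s x y unfolding incpos_def by auto
  have "(?A *\<^sub>v v) $ i = (\<Sum>j<m. v $ j * (x i + y j) powr (-s))"
    using i(1) v(1) by (auto simp: scalar_prod_def lessThan_atLeast0 mult.commute intro!: sum.cong)
  then show False using v(3) i by simp
qed


lemma incpos_upd:
  assumes "incpos (Suc m) x" "x m \<le> a"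
  shows "incpos (Suc m) (x(m := a))"
  using assms unfolding incpos_def
  by (auto simp: less_Suc_eq) (metis less_le_trans order.strict_trans2 less_Suc_eq)+

lemma incpos_less:
  assumes "incpos (Suc m) x" shows "incpos m x"
  using assms unfolding incpos_def by auto

lemma kernel_pos:
  assumes s: "0 < s"
  shows "incpos m x \<Longrightarrow> incpos m y \<Longrightarrow> det (mat m m (\<lambda>(i,j). (x i + y j) powr (-s))) > 0"
proof (induction m arbitrary: x y)
  case 0
  have "mat 0 0 (\<lambda>(i,j). (x i + y j) powr (-s)) = 1\<^sub>m 0" by (rule eq_matI) auto
  then show ?case by simp
next
  case (Suc m)
  let ?K = "\<lambda>x y. mat (Suc m) (Suc m) (\<lambda>(i,j). (x i + y j) powr (-s))"
  have IH: "det (mat m m (\<lambda>(i,j). (x i + y j) powr (-s))) > 0"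
    using Suc.IH incpos_less Suc.prems by blast
  have xpos: "0 < x m" "0 < y m" using Suc.prems unfolding incpos_def by auto
  define B where "B T = mat (Suc m) (Suc m) (\<lambda>(i,j). (if i = m then T powr s else 1) * ((x(m:=T)) i + (y(m:=T)) j) powr (-s))" for T
  define g where "g i j = (if i < m \<and> j < m then (x i + y j) powr (-s) else if i < m then 0 else if j < m then 1 else 2 powr (-s))" for i j
  have lim: "((\<lambda>T. det (B T)) \<longlongrightarrow> det (mat (Suc m) (Suc m) (\<lambda>(i,j). g i j))) at_top"
    unfolding B_def
  proof (rule det_tendsto)
    fix i j assume i: "i < Suc m" and j: "j < Suc m"
    show "((\<lambda>T. (if i = m then T powr s else 1) * ((x(m:=T)) i + (y(m:=T)) j) powr (-s)) \<longlongrightarrow> g i j) at_top"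
    proof (cases "i = m")
      case False
      then have im: "i < m" using i by simp
      show ?thesis
      proof (cases "j = m")
        case False
        then show ?thesis using im j by (simp add: g_def)
      next
        case True
        have "filterlim (\<lambda>T. x i + T) at_top at_top"
          by (rule filterlim_tendsto_add_at_top[OF tendsto_const filterlim_ident])
        then have "((\<lambda>T. (x i + T) powr (-s)) \<longlongrightarrow> 0) at_top"
          by (rule tendsto_neg_powr[rotated]) (use s in simp)
        then show ?thesis using im True by (simp add: g_def)
      qed
    next
      case True
      show ?thesis
      proof (cases "j = m")
        case False
        then have jm: "j < m" using j by simp
        have yj: "y j > 0" using Suc.prems jm unfolding incpos_def by auto
        have ev: "eventually (\<lambda>T. (1 + y j / T) powr (-s) = T powr s * (T + y j) powr (-s)) at_top"
        proof -
          have "eventually (\<lambda>T::real. T > 0) at_top" by (rule eventually_gt_at_top)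
          then show ?thesis
          proof (rule eventually_mono)
            fix T :: real assume T: "T > 0"
            have "1 + y j / T = (T + y j) / T" using T by (simp add: field_simps)
            also have "((T + y j) / T) powr (-s) = (T + y j) powr (-s) / T powr (-s)"
              by (rule powr_divide)
            also have "\<dots> = T powr s * (T + y j) powr (-s)"
              using T by (simp add: powr_minus divide_inverse)
            finally show "(1 + y j / T) powr (-s) = T powr s * (T + y j) powr (-s)" .
          qed
        qed
        have "((\<lambda>T. y j / T) \<longlongrightarrow> 0) at_top"
          by (rule tendsto_divide_0[OF tendsto_const filterlim_at_top_imp_at_infinity[OF filterlim_ident]])
        then have "((\<lambda>T. 1 + y j / T) \<longlongrightarrow> 1) at_top"
          using tendsto_add[OF tendsto_const, of "\<lambda>T. y j / T" 0 at_top 1] by simp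
        then have "((\<lambda>T. (1 + y j / T) powr (-s)) \<longlongrightarrow> 1 powr (-s)) at_top"
          by (intro tendsto_powr) auto
        then have "((\<lambda>T. T powr s * (T + y j) powr (-s)) \<longlongrightarrow> 1) at_top"
          using tendsto_cong[OF ev] by simp
        then show ?thesis using True jm by (simp add: g_def)
      next
        case jm: True
        have ev: "eventually (\<lambda>T. 2 powr (-s) = T powr s * (T + T) powr (-s)) at_top"
        proof -
          have "eventually (\<lambda>T::real. T > 0) at_top" by (rule eventually_gt_at_top)
          then show ?thesis
          proof (rule eventually_mono)
            fix T :: real assume T: "T > 0"
            have "(T + T) powr (-s) = 2 powr (-s) * T powr (-s)" using T
              by (simp add: powr_mult[symmetric])
            then show "2 powr (-s) = T powr s * (T + T) powr (-s)"
              using T by (simp add: powr_minus field_simps)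
          qed
        qed
        have "((\<lambda>T::real. 2 powr (-s)) \<longlongrightarrow> 2 powr (-s)) at_top" by (rule tendsto_const)
        then have "((\<lambda>T. T powr s * (T + T) powr (-s)) \<longlongrightarrow> 2 powr (-s)) at_top"
          by (rule tendsto_cong[OF ev, THEN iffD1])
        then show ?thesis using True jm by (simp add: g_def)
      qed
    qed
  qed
  have detg: "det (mat (Suc m) (Suc m) (\<lambda>(i,j). g i j)) = 2 powr (-s) * det (mat m m (\<lambda>(i,j). (x i + y j) powr (-s)))"
  proof -
    let ?G = "mat (Suc m) (Suc m) (\<lambda>(i,j). g i j)"
    have "det ?G = (\<Sum>i<Suc m. ?G $$ (i,m) * cofactor ?G i m)"
      by (rule laplace_expansion_column) auto
    also have "\<dots> = ?G $$ (m,m) * cofactor ?G m m"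
      by (simp add: g_def)
    also have "mat_delete ?G m m = mat m m (\<lambda>(i,j). (x i + y j) powr (-s))"
      by (rule eq_matI) (auto simp: mat_delete_def g_def)
    then have "cofactor ?G m m = det (mat m m (\<lambda>(i,j). (x i + y j) powr (-s)))"
      unfolding cofactor_def by simp
    finally show ?thesis by (simp add: g_def)
  qed
  have "eventually (\<lambda>T. det (B T) > 0) at_top"
    using order_tendstoD(1)[OF lim] detg IH by simp
  then obtain N where N: "\<And>T. T \<ge> N \<Longrightarrow> det (B T) > 0"
    unfolding eventually_at_top_linorder by blast
  define T where "T = max N (max (x m) (y m) + 1)"
  have T: "T \<ge> N" "T > x m" "T > y m" "T > 0" using xpos unfolding T_def by auto
  have BT: "B T = multrow m (T powr s) (?K (x(m:=T)) (y(m:=T)))"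
    unfolding B_def by (rule eq_matI) auto
  have "det (B T) = T powr s * det (?K (x(m:=T)) (y(m:=T)))"
    unfolding BT by (rule det_multrow) auto
  then have KT: "det (?K (x(m:=T)) (y(m:=T))) > 0"
    using N[OF T(1)] T(4) by (simp add: zero_less_mult_iff)
  define xt where "xt t = x(m := (1-t) * x m + t * T)" for t
  define yt where "yt t = y(m := (1-t) * y m + t * T)" for t
  define \<phi> where "\<phi> t = det (?K (xt t) (yt t))" for t
  have inc: "incpos (Suc m) (xt t) \<and> incpos (Suc m) (yt t)" if t: "t \<in> {0..1}" for t
  proof -
    have a: "x m \<le> (1-t) * x m + t * T" using t T mult_left_mono[of "x m" T t]
      by (auto simp: algebra_simps)
    have b: "y m \<le> (1-t) * y m + t * T" using t T mult_left_mono[of "y m" T t]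
      by (auto simp: algebra_simps)
    show ?thesis unfolding xt_def yt_def using incpos_upd[of m x, OF _ a] incpos_upd[of m y, OF _ b] Suc.prems by auto
  qed
  have nz: "\<phi> t \<noteq> 0" if "t \<in> {0..1}" for t :: real
    unfolding \<phi>_def using kernel_nz[OF s] inc[OF that] by blast
  have cont: "continuous_on {0..1} \<phi>"
    unfolding continuous_on_def
  proof
    fix t :: real assume t: "t \<in> {0..1}"
    show "(\<phi> \<longlongrightarrow> \<phi> t) (at t within {0..1})"
      unfolding \<phi>_def
    proof (rule det_tendsto)
      fix i j assume i: "i < Suc m" and j: "j < Suc m"
      have p: "xt t i + yt t j > 0" using inc[OF t] i j unfolding incpos_def by (simp add: add_pos_pos)
      have lx: "((\<lambda>t'. xt t' i) \<longlongrightarrow> xt t i) (at t within {0..1})"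
        by (cases "i = m") (auto simp: xt_def intro!: tendsto_intros)
      have ly: "((\<lambda>t'. yt t' j) \<longlongrightarrow> yt t j) (at t within {0..1})"
        by (cases "j = m") (auto simp: yt_def intro!: tendsto_intros)
      show "((\<lambda>t'. (xt t' i + yt t' j) powr (-s)) \<longlongrightarrow> (xt t i + yt t j) powr (-s)) (at t within {0..1})"
        by (rule tendsto_powr[OF tendsto_add[OF lx ly] tendsto_const]) (use p in simp)
    qed
  qed
  have p0: "\<phi> 0 = det (?K x y)" unfolding \<phi>_def xt_def yt_def by simp
  have p1: "\<phi> 1 = det (?K (x(m:=T)) (y(m:=T)))" unfolding \<phi>_def xt_def yt_def by simp
  show ?case
  proof (rule ccontr)
    assume "\<not> ?case"
    then have "\<phi> 0 \<le> 0" using p0 by simp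
    moreover have "0 \<le> \<phi> 1" using p1 KT by simp
    ultimately obtain t :: real where "0 \<le> t" "t \<le> 1" "\<phi> t = 0"
      using IVT'[of \<phi> 0 0 1] cont by auto
    then show False using nz by auto
  qed
qed



lemma det_scale:
  fixes d e :: "nat \<Rightarrow> real"
  shows "det (mat m m (\<lambda>(i,j). d i * e j * K i j)) = (\<Prod>i<m. d i) * (\<Prod>j<m. e j) * det (mat m m (\<lambda>(i,j). K i j))"
proof -
  have e: "det (mat m m (\<lambda>(i,j). h i j)) = (\<Sum>p | p permutes {0..<m}. of_int (sign p) * (\<Prod>i = 0..<m. h i (p i)))"
    for h :: "nat \<Rightarrow> nat \<Rightarrow> real"
  proof -
    have "det (mat m m (\<lambda>(i,j). h i j)) = (\<Sum>p | p permutes {0..<m}. of_int (sign p) * (\<Prod>i = 0..<m. (mat m m (\<lambda>(i,j). h i j)) $$ (i, p i)))"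
      by (rule det_def') simp
    also have "\<dots> = (\<Sum>p | p permutes {0..<m}. of_int (sign p) * (\<Prod>i = 0..<m. h i (p i)))"
    proof (intro sum.cong refl arg_cong2[where f="(*)"] prod.cong)
      fix p i assume "p \<in> {p. p permutes {0..<m}}" "i \<in> {0..<m}"
      then have "p i < m" by (auto dest: permutes_in_image)
      then show "mat m m (\<lambda>(i,j). h i j) $$ (i, p i) = h i (p i)" using \<open>i \<in> {0..<m}\<close> by simp
    qed
    finally show ?thesis .
  qed
  have "(\<Prod>i = 0..<m. d i * e (p i) * K i (p i)) = (\<Prod>i<m. d i) * (\<Prod>j<m. e j) * (\<Prod>i = 0..<m. K i (p i))"
    if p: "p permutes {0..<m}" for p
  proof -
    have "(\<Prod>i = 0..<m. e (p i)) = (\<Prod>j = 0..<m. e j)"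
      using prod.permute[OF p, of e] by (simp add: comp_def)
    then show ?thesis by (simp add: prod.distrib lessThan_atLeast0)
  qed
  then show ?thesis unfolding e by (simp add: sum_distrib_left algebra_simps)
qed

lemma kernel_pos_w:
  assumes "0 < s" "incpos m x" "incpos m y" "\<forall>i<m. 0 < d i" "\<forall>j<m. 0 < e j"
  shows "det (mat m m (\<lambda>(i,j). d i * e j * (x i + y j) powr (-s))) > 0"
proof -
  have "det (mat m m (\<lambda>(i,j). d i * e j * (x i + y j) powr (-s))) = (\<Prod>i<m. d i) * (\<Prod>j<m. e j) * det (mat m m (\<lambda>(i,j). (x i + y j) powr (-s)))"
    by (rule det_scale)
  moreover have "(\<Prod>i<m. d i) > 0" "(\<Prod>j<m. e j) > 0" using assms(4,5) by (auto intro!: prod_pos)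
  ultimately show ?thesis using kernel_pos[OF assms(1-3)] by simp
qed

lemma submatrix_mat:
  assumes "I \<subseteq> {..<n}" "J \<subseteq> {..<n}"
  shows "submatrix (mat n n G) I J = mat (card I) (card J) (\<lambda>(i,j). G (pick I i, pick J j))"
proof -
  have cI: "{i. i < n \<and> i \<in> I} = I" "{j. j < n \<and> j \<in> J} = J" using assms by auto
  have fin: "finite I" "finite J" using assms finite_subset by blast+
  have pI: "pick I i < n" if "i < card I" for i using pick_in_set_le[OF that] assms by auto
  have pJ: "pick J i < n" if "i < card J" for i using pick_in_set_le[OF that] assms by auto
  show ?thesis unfolding submatrix_def dim_row_mat dim_col_mat cI
    by (rule eq_matI) (auto simp: pI pJ)
qed

lemma incpos_pick:
  assumes "I \<subseteq> {..<n}" "\<And>i j. i < j \<Longrightarrow> j < n \<Longrightarrow> f i < f j" "\<And>i. i < n \<Longrightarrow> 0 < f i"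
  shows "incpos (card I) (f \<circ> pick I)"
  unfolding incpos_def
proof (intro conjI allI impI)
  fix i assume "i < card I"
  then have "pick I i \<in> I" using pick_in_set_le by auto
  then show "0 < (f \<circ> pick I) i" using assms by auto
next
  fix i j assume ij: "i < j" "j < card I"
  then have "pick I i < pick I j" "pick I j \<in> I" using pick_mono_le pick_in_set_le by auto
  then show "(f \<circ> pick I) i < (f \<circ> pick I) j" using assms by auto
qed

lemma tp_kernel:
  assumes G: "\<And>i j. i < n \<Longrightarrow> j < n \<Longrightarrow> G (i,j) = d i * e j * (x i + y j) powr (-s)"
    and s: "0 < s" and d: "\<And>i. i < n \<Longrightarrow> 0 < d i" and e: "\<And>i. i < n \<Longrightarrow> 0 < e i"
    and xi: "\<And>i j. i < j \<Longrightarrow> j < n \<Longrightarrow> x i < x j" "\<And>i. i < n \<Longrightarrow> 0 < x i"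
    and yi: "\<And>i j. i < j \<Longrightarrow> j < n \<Longrightarrow> y i < y j" "\<And>i. i < n \<Longrightarrow> 0 < y i"
  shows "totally_positive (mat n n G)"
  unfolding totally_positive_def
proof (intro allI impI, elim conjE)
  fix I J assume I: "I \<subseteq> {..<dim_row (mat n n G)}" and J: "J \<subseteq> {..<dim_col (mat n n G)}"
    and c: "card I = card J"
  have I': "I \<subseteq> {..<n}" and J': "J \<subseteq> {..<n}" using I J by auto
  let ?k = "card I"
  have "submatrix (mat n n G) I J = mat ?k ?k (\<lambda>(i,j). (d \<circ> pick I) i * (e \<circ> pick J) j * ((x \<circ> pick I) i + (y \<circ> pick J) j) powr (-s))"
    unfolding submatrix_mat[OF I' J'] c[symmetric]
  proof (rule eq_matI)
    fix i j assume ij: "i < dim_row (mat ?k ?k (\<lambda>(i,j). (d \<circ> pick I) i * (e \<circ> pick J) j * ((x \<circ> pick I) i + (y \<circ> pick J) j) powr (-s)))"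
      "j < dim_col (mat ?k ?k (\<lambda>(i,j). (d \<circ> pick I) i * (e \<circ> pick J) j * ((x \<circ> pick I) i + (y \<circ> pick J) j) powr (-s)))"
    then have "pick I i \<in> I" "pick J j \<in> J" using pick_in_set_le c by auto
    then have "pick I i < n" "pick J j < n" using I' J' by auto
    then show "mat ?k ?k (\<lambda>(i,j). G (pick I i, pick J j)) $$ (i, j) =
        mat ?k ?k (\<lambda>(i,j). (d \<circ> pick I) i * (e \<circ> pick J) j * ((x \<circ> pick I) i + (y \<circ> pick J) j) powr (-s)) $$ (i, j)"
      using ij G by simp
  qed auto
  moreover have "det \<dots> > 0"
  proof (rule kernel_pos_w[OF s])
    show "incpos ?k (x \<circ> pick I)" by (rule incpos_pick[OF I' xi])
    show "incpos ?k (y \<circ> pick J)" unfolding c by (rule incpos_pick[OF J' yi])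
    show "\<forall>i<?k. 0 < (d \<circ> pick I) i"
    proof (intro allI impI)
      fix i assume "i < ?k" then have "pick I i \<in> I" by (rule pick_in_set_le)
      then show "0 < (d \<circ> pick I) i" using I' d by auto
    qed
    show "\<forall>i<?k. 0 < (e \<circ> pick J) i"
    proof (intro allI impI)
      fix i assume "i < ?k" then have "pick J i \<in> J" using c pick_in_set_le by metis
      then show "0 < (e \<circ> pick J) i" using J' e by auto
    qed
  qed
  ultimately show "0 < det (submatrix (mat n n G) I J)" by simp
qed



lemma L1:
  fixes A B S r :: real
  assumes "0 < A" "0 < B" "0 < S"
  shows "1 / (A * B * S / 2) powr r = (2 powr r / A powr r) * (1 / B powr r) * S powr (-r)"
proof -
  have "(A * B * S / 2) powr r = A powr r * B powr r * S powr r / 2 powr r"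
    by (simp add: powr_divide powr_mult)
  then show ?thesis using assms by (simp add: powr_minus field_simps)
qed

lemma L2:
  fixes a b r :: real
  assumes "0 < a" "0 < b"
  shows "(2 * a * b / (a + b)) powr r = (2 * a) powr r * b powr r * (a + b) powr (-r)"
proof -
  have "(2 * a * b / (a + b)) powr r = (2 * a) powr r * b powr r / (a + b) powr r"
    by (simp add: powr_divide powr_mult)
  then show ?thesis using assms by (simp add: powr_minus field_simps)
qed

lemma L3:
  fixes a b \<nu> :: real
  assumes "0 < a" "0 < b"
  shows "heinz_mean \<nu> a b = a powr (min \<nu> (1-\<nu>)) * b powr (min \<nu> (1-\<nu>)) * (a powr \<bar>2*\<nu>-1\<bar> + b powr \<bar>2*\<nu>-1\<bar>) / 2"
proof (cases "\<nu> \<ge> 1/2")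
  case True
  then have e: "min \<nu> (1-\<nu>) = 1 - \<nu>" "\<bar>2*\<nu>-1\<bar> = 2*\<nu>-1" by auto
  have "a powr (1-\<nu>) * a powr (2*\<nu>-1) = a powr \<nu>" "b powr (1-\<nu>) * b powr (2*\<nu>-1) = b powr \<nu>"
    by (simp_all add: powr_add[symmetric])
  then show ?thesis unfolding e heinz_mean_def by (simp add: algebra_simps)
next
  case False
  then have e: "min \<nu> (1-\<nu>) = \<nu>" "\<bar>2*\<nu>-1\<bar> = 1 - 2*\<nu>" by auto
  have "a powr \<nu> * a powr (1-2*\<nu>) = a powr (1-\<nu>)" "b powr \<nu> * b powr (1-2*\<nu>) = b powr (1-\<nu>)"
    by (simp_all add: powr_add[symmetric])
  then show ?thesis unfolding e heinz_mean_def by (simp add: algebra_simps)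
qed

lemma ones_det_nonneg: "det (mat k k (\<lambda>_. 1::real)) \<ge> 0"
proof (cases "k \<le> 1")
  case True
  then have "mat k k (\<lambda>_. 1::real) = 1\<^sub>m k" by (intro eq_matI) auto
  then show ?thesis by simp
next
  case False
  have "det (mat k k (\<lambda>_. 1::real)) = 0"
    by (rule det_identical_rows[of _ k 0 1]) (use False in \<open>auto simp: row_mat\<close>)
  then show ?thesis by simp
qed

lemma tn_rank1:
  assumes G: "\<And>i j. i < n \<Longrightarrow> j < n \<Longrightarrow> G (i,j) = d i * e j"
    and d: "\<And>i. i < n \<Longrightarrow> 0 < d i" and e: "\<And>i. i < n \<Longrightarrow> 0 < e i"
  shows "totally_nonnegative (mat n n G)"
  unfolding totally_nonnegative_def
proof (intro allI impI, elim conjE)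
  fix I J assume I: "I \<subseteq> {..<dim_row (mat n n G)}" and J: "J \<subseteq> {..<dim_col (mat n n G)}"
    and c: "card I = card J"
  have I': "I \<subseteq> {..<n}" and J': "J \<subseteq> {..<n}" using I J by auto
  let ?k = "card I"
  have "submatrix (mat n n G) I J = mat ?k ?k (\<lambda>(i,j). (d \<circ> pick I) i * (e \<circ> pick J) j * (\<lambda>i j. 1) i j)"
    unfolding submatrix_mat[OF I' J'] c[symmetric]
  proof (rule eq_matI)
    fix i j assume ij: "i < dim_row (mat ?k ?k (\<lambda>(i,j). (d \<circ> pick I) i * (e \<circ> pick J) j * (\<lambda>i j. 1) i j))"
      "j < dim_col (mat ?k ?k (\<lambda>(i,j). (d \<circ> pick I) i * (e \<circ> pick J) j * (\<lambda>i j. 1) i j))"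
    then have "pick I i \<in> I" "pick J j \<in> J" using pick_in_set_le c by auto
    then have "pick I i < n" "pick J j < n" using I' J' by auto
    then show "mat ?k ?k (\<lambda>(i,j). G (pick I i, pick J j)) $$ (i, j) =
        mat ?k ?k (\<lambda>(i,j). (d \<circ> pick I) i * (e \<circ> pick J) j * (\<lambda>i j. 1) i j) $$ (i, j)"
      using ij G by simp
  qed auto
  also have "det \<dots> = (\<Prod>i<?k. (d \<circ> pick I) i) * (\<Prod>j<?k. (e \<circ> pick J) j) * det (mat ?k ?k (\<lambda>(i,j). (\<lambda>i j. 1::real) i j))"
    by (rule det_scale)
  finally have eq: "det (submatrix (mat n n G) I J) = (\<Prod>i<?k. (d \<circ> pick I) i) * (\<Prod>j<?k. (e \<circ> pick J) j) * det (mat ?k ?k (\<lambda>_. 1::real))"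
    by simp
  have p1: "(\<Prod>i<?k. (d \<circ> pick I) i) \<ge> 0"
  proof (intro prod_nonneg)
    fix i assume "i \<in> {..<?k}" then have "pick I i \<in> I" using pick_in_set_le by auto
    then show "0 \<le> (d \<circ> pick I) i" using I' d[of "pick I i"] by auto
  qed
  have p2: "(\<Prod>j<?k. (e \<circ> pick J) j) \<ge> 0"
  proof (intro prod_nonneg)
    fix i assume "i \<in> {..<?k}" then have "pick J i \<in> J" using pick_in_set_le c by (metis lessThan_iff)
    then show "0 \<le> (e \<circ> pick J) i" using J' e[of "pick J i"] by auto
  qed
  show "0 \<le> det (submatrix (mat n n G) I J)" unfolding eq
    using p1 p2 ones_det_nonneg by (intro mult_nonneg_nonneg) auto
qed

lemma max_lim:
  fixes X Y :: real
  assumes X: "0 < X" and Y: "0 < Y"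
  shows "((\<lambda>N. (X powr real (Suc N) + Y powr real (Suc N)) powr (-(1 / real (Suc N)))) \<longlongrightarrow> 1 / max X Y) sequentially"
proof -
  define M where "M = max X Y"
  have M: "0 < M" using X Y unfolding M_def by auto
  have bounds: "2 powr (-(1 / real (Suc N))) * (1 / M) \<le> (X powr real (Suc N) + Y powr real (Suc N)) powr (-(1 / real (Suc N)))
     \<and> (X powr real (Suc N) + Y powr real (Suc N)) powr (-(1 / real (Suc N))) \<le> 1 / M" for N
  proof -
    let ?p = "real (Suc N)"
    have pp: "?p > 0" by simp
    have Mp: "M powr ?p > 0" using M by simp
    have lo: "M powr ?p \<le> X powr ?p + Y powr ?p"
      using X Y unfolding M_def by (cases "X \<le> Y") (auto simp: max_def)
    have hi: "X powr ?p + Y powr ?p \<le> 2 * M powr ?p"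
    proof -
      have "X powr ?p \<le> M powr ?p" "Y powr ?p \<le> M powr ?p"
        using X Y unfolding M_def by (auto intro!: powr_mono2)
      then show ?thesis by simp
    qed
    have a: "-(1 / ?p) \<le> 0" by simp
    have e1: "(M powr ?p) powr (-(1 / ?p)) = 1 / M"
      using M by (simp add: powr_powr powr_minus divide_inverse)
    have e2: "(2 * M powr ?p) powr (-(1 / ?p)) = 2 powr (-(1 / ?p)) * (1 / M)"
      using e1 by (simp add: powr_mult)
    have "(X powr ?p + Y powr ?p) powr (-(1 / ?p)) \<le> (M powr ?p) powr (-(1 / ?p))"
      by (rule powr_mono2'[OF a Mp lo])
    moreover have "(2 * M powr ?p) powr (-(1 / ?p)) \<le> (X powr ?p + Y powr ?p) powr (-(1 / ?p))"
    proof (rule powr_mono2'[OF a _ hi])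
      show "0 < X powr ?p + Y powr ?p" using X Y by (simp add: add_pos_pos)
    qed
    ultimately show ?thesis using e1 e2 by simp
  qed
  have l0: "((\<lambda>N. -(1 / real (Suc N))) \<longlongrightarrow> 0) sequentially"
    using tendsto_minus[OF LIMSEQ_inverse_real_of_nat] by (simp add: divide_inverse)
  have "((\<lambda>N. 2 powr (-(1 / real (Suc N))) * (1 / M)) \<longlongrightarrow> 2 powr 0 * (1 / M)) sequentially"
    by (intro tendsto_mult tendsto_powr l0 tendsto_const) auto
  then have l1: "((\<lambda>N. 2 powr (-(1 / real (Suc N))) * (1 / M)) \<longlongrightarrow> 1 / M) sequentially" by simp
  show ?thesis unfolding M_def[symmetric]
    by (rule tendsto_sandwich[OF always_eventually always_eventually l1 tendsto_const]) (use bounds in auto)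
qed

lemma tn_max:
  assumes G: "\<And>i j. i < n \<Longrightarrow> j < n \<Longrightarrow> G (i,j) = 1 / max (X i) (X j)"
    and xi: "\<And>i j. i < j \<Longrightarrow> j < n \<Longrightarrow> X i < X j" "\<And>i. i < n \<Longrightarrow> 0 < X i"
  shows "totally_nonnegative (mat n n G)"
  unfolding totally_nonnegative_def
proof (intro allI impI, elim conjE)
  fix I J assume I: "I \<subseteq> {..<dim_row (mat n n G)}" and J: "J \<subseteq> {..<dim_col (mat n n G)}"
    and c: "card I = card J"
  have I': "I \<subseteq> {..<n}" and J': "J \<subseteq> {..<n}" using I J by auto
  let ?k = "card I"
  have pI: "pick I i < n" if "i < ?k" for i using pick_in_set_le[OF that] I' by auto
  have pJ: "pick J i < n" if "i < ?k" for i using pick_in_set_le[of i J] that c J' by auto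
  have sub: "submatrix (mat n n G) I J = mat ?k ?k (\<lambda>(i,j). 1 / max (X (pick I i)) (X (pick J j)))"
    unfolding submatrix_mat[OF I' J'] c[symmetric]
    by (rule eq_matI) (auto simp: G pI pJ c)
  define F where "F N i j = ((X (pick I i)) powr real (Suc N) + (X (pick J j)) powr real (Suc N)) powr (-(1 / real (Suc N)))" for N i j
  have lim: "((\<lambda>N. det (mat ?k ?k (\<lambda>(i,j). F N i j))) \<longlongrightarrow> det (mat ?k ?k (\<lambda>(i,j). 1 / max (X (pick I i)) (X (pick J j))))) sequentially"
    unfolding F_def
    by (rule det_tendsto, rule max_lim) (use xi(2) pI pJ in auto)
  have pos: "det (mat ?k ?k (\<lambda>(i,j). F N i j)) > 0" for N
  proof -
    let ?p = "real (Suc N)"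
    have inc1: "\<And>i j. i < j \<Longrightarrow> j < n \<Longrightarrow> X i powr ?p < X j powr ?p"
      using xi by (intro powr_less_mono2) (auto intro: less_imp_le)
    have inc2: "0 < X i powr ?p" if "i < n" for i using xi(2)[OF that] by simp
    have "det (mat ?k ?k (\<lambda>(i,j). (((\<lambda>i. X i powr ?p) \<circ> pick I) i + ((\<lambda>i. X i powr ?p) \<circ> pick J) j) powr (-(1/?p)))) > 0"
    proof (rule kernel_pos)
      show "0 < 1 / ?p" by simp
      show "incpos ?k ((\<lambda>i. X i powr ?p) \<circ> pick I)" by (rule incpos_pick[OF I' inc1 inc2])
      show "incpos ?k ((\<lambda>i. X i powr ?p) \<circ> pick J)" unfolding c by (rule incpos_pick[OF J' inc1 inc2])
    qed
    then show ?thesis unfolding F_def by simp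
  qed
  have "0 \<le> det (mat ?k ?k (\<lambda>(i,j). 1 / max (X (pick I i)) (X (pick J j))))"
    by (rule tendsto_lowerbound[OF lim]) (use pos in \<open>auto intro: always_eventually less_imp_le\<close>)
  then show "0 \<le> det (submatrix (mat n n G) I J)" unfolding sub .
qed



theorem theorem3p2:
  fixes n :: nat and lam :: "nat \<Rightarrow> real" and r :: real
  assumes pos: "0 < lam 0"
    and incr: "\<And>i j. i < j \<Longrightarrow> j < n \<Longrightarrow> lam i < lam j"
    and r: "r > 0"
  shows "totally_positive (mat n n (\<lambda>(i, j). 1 / arith_mean (lam i) (lam j) powr r))
       \<and> totally_positive (mat n n (\<lambda>(i, j). harm_mean (lam i) (lam j) powr r))
       \<and> (\<forall>\<nu>. 0 \<le> \<nu> \<and> \<nu> \<le> 1 \<and> \<nu> \<noteq> 1/2 \<longrightarrow>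
            totally_positive (mat n n (\<lambda>(i, j). 1 / heinz_mean \<nu> (lam i) (lam j) powr r)))
       \<and> (\<forall>\<alpha>. 0 < \<alpha> \<longrightarrow>
            totally_positive (mat n n (\<lambda>(i, j). 1 / binom_mean \<alpha> (lam i) (lam j) powr r)))
       \<and> totally_nonnegative (mat n n (\<lambda>(i, j). 1 / heinz_mean (1/2) (lam i) (lam j) powr r))
       \<and> totally_nonnegative (mat n n (\<lambda>(i, j). 1 / binom_mean0 (lam i) (lam j) powr r))
       \<and> totally_nonnegative (mat n n (\<lambda>(i, j). 1 / binom_mean_inf (lam i) (lam j) powr r))"
proof -
  have lpos: "0 < lam i" if "i < n" for i
  proof (cases "i = 0")
    case True then show ?thesis using pos by simp
  next
    case False then show ?thesis using pos incr[of 0 i] that by simp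
  qed
  have lnz: "lam i \<noteq> 0" if "i < n" for i using lpos[OF that] by simp
  have P1: "totally_positive (mat n n (\<lambda>(i, j). 1 / arith_mean (lam i) (lam j) powr r))"
  proof (rule tp_kernel[where d="\<lambda>_. 2 powr r" and e="\<lambda>_. 1" and x=lam and y=lam and s=r])
    fix i j assume ij: "i < n" "j < n"
    have "1 / (1 * 1 * (lam i + lam j) / 2) powr r = (2 powr r / 1 powr r) * (1 / 1 powr r) * (lam i + lam j) powr (-r)"
      using lpos[OF ij(1)] lpos[OF ij(2)] by (intro L1) auto
    then show "(\<lambda>(i, j). 1 / arith_mean (lam i) (lam j) powr r) (i, j) = 2 powr r * 1 * (lam i + lam j) powr - r"
      by (simp add: arith_mean_def)
  qed (use r incr lpos in auto)
  have P2: "totally_positive (mat n n (\<lambda>(i, j). harm_mean (lam i) (lam j) powr r))"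
  proof (rule tp_kernel[where d="\<lambda>i. (2 * lam i) powr r" and e="\<lambda>j. lam j powr r" and x=lam and y=lam and s=r])
    fix i j assume ij: "i < n" "j < n"
    show "(\<lambda>(i, j). harm_mean (lam i) (lam j) powr r) (i, j) = (2 * lam i) powr r * lam j powr r * (lam i + lam j) powr - r"
      using L2[OF lpos[OF ij(1)] lpos[OF ij(2)]] by (simp add: harm_mean_def)
  qed (use r incr lpos lnz in auto)
  have P3: "totally_positive (mat n n (\<lambda>(i, j). 1 / heinz_mean \<nu> (lam i) (lam j) powr r))"
    if nu: "0 \<le> \<nu>" "\<nu> \<le> 1" "\<nu> \<noteq> 1/2" for \<nu>
  proof -
    define p where "p = min \<nu> (1-\<nu>)"
    define t where "t = \<bar>2*\<nu>-1\<bar>"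
    have t: "t > 0" using nu unfolding t_def by auto
    show ?thesis
    proof (rule tp_kernel[where d="\<lambda>i. 2 powr r / (lam i powr p) powr r" and e="\<lambda>j. 1 / (lam j powr p) powr r"
          and x="\<lambda>i. lam i powr t" and y="\<lambda>i. lam i powr t" and s=r])
      fix i j assume ij: "i < n" "j < n"
      have heq: "heinz_mean \<nu> (lam i) (lam j) = lam i powr p * lam j powr p * (lam i powr t + lam j powr t) / 2"
        unfolding p_def t_def by (rule L3[OF lpos[OF ij(1)] lpos[OF ij(2)]])
      have leq: "1 / (lam i powr p * lam j powr p * (lam i powr t + lam j powr t) / 2) powr r
          = (2 powr r / (lam i powr p) powr r) * (1 / (lam j powr p) powr r) * (lam i powr t + lam j powr t) powr (-r)"
        using lpos[OF ij(1)] lpos[OF ij(2)] by (intro L1) (auto intro: add_pos_pos)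
      show "(\<lambda>(i, j). 1 / heinz_mean \<nu> (lam i) (lam j) powr r) (i, j) =
          2 powr r / (lam i powr p) powr r * (1 / (lam j powr p) powr r) * (lam i powr t + lam j powr t) powr - r"
        by (simp only: case_prod_conv heq leq)
    next
      fix i j assume "i < j" "j < n"
      then show "lam i powr t < lam j powr t"
        using incr lpos t by (intro powr_less_mono2) (auto intro: less_imp_le)
    next
      fix i j assume "i < j" "j < n"
      then show "lam i powr t < lam j powr t"
        using incr lpos t by (intro powr_less_mono2) (auto intro: less_imp_le)
    qed (use r lpos lnz in \<open>auto intro!: divide_pos_pos\<close>)
  qed
  have P4: "totally_positive (mat n n (\<lambda>(i, j). 1 / binom_mean \<alpha> (lam i) (lam j) powr r))"
    if a: "0 < \<alpha>" for \<alpha>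
  proof (rule tp_kernel[where d="\<lambda>_. 2 powr (r/\<alpha>)" and e="\<lambda>_. 1"
          and x="\<lambda>i. lam i powr \<alpha>" and y="\<lambda>i. lam i powr \<alpha>" and s="r/\<alpha>"])
    fix i j assume ij: "i < n" "j < n"
    have "binom_mean \<alpha> (lam i) (lam j) powr r = (1 * 1 * (lam i powr \<alpha> + lam j powr \<alpha>) / 2) powr (r/\<alpha>)"
      unfolding binom_mean_def by (simp add: powr_powr)
    moreover have "1 / (1 * 1 * (lam i powr \<alpha> + lam j powr \<alpha>) / 2) powr (r/\<alpha>)
        = (2 powr (r/\<alpha>) / 1 powr (r/\<alpha>)) * (1 / 1 powr (r/\<alpha>)) * (lam i powr \<alpha> + lam j powr \<alpha>) powr (-(r/\<alpha>))"
      using lpos[OF ij(1)] lpos[OF ij(2)] by (intro L1) (auto intro: add_pos_pos)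
    ultimately show "(\<lambda>(i, j). 1 / binom_mean \<alpha> (lam i) (lam j) powr r) (i, j) =
        2 powr (r/\<alpha>) * 1 * (lam i powr \<alpha> + lam j powr \<alpha>) powr - (r/\<alpha>)"
      by simp
  next
    fix i j assume "i < j" "j < n"
    then show "lam i powr \<alpha> < lam j powr \<alpha>"
      using incr lpos a by (intro powr_less_mono2) (auto intro: less_imp_le)
  next
    fix i j assume "i < j" "j < n"
    then show "lam i powr \<alpha> < lam j powr \<alpha>"
      using incr lpos a by (intro powr_less_mono2) (auto intro: less_imp_le)
  qed (use r a lpos lnz in auto)
  have P5: "totally_nonnegative (mat n n (\<lambda>(i, j). 1 / heinz_mean (1/2) (lam i) (lam j) powr r))"
  proof (rule tn_rank1[where d="\<lambda>i. 1 / (lam i powr (1/2)) powr r" and e="\<lambda>i. 1 / (lam i powr (1/2)) powr r"])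
    fix i j assume ij: "i < n" "j < n"
    have "heinz_mean (1/2) (lam i) (lam j) = lam i powr (1/2) * lam j powr (1/2)"
      unfolding heinz_mean_def by simp
    then show "(\<lambda>(i, j). 1 / heinz_mean (1/2) (lam i) (lam j) powr r) (i, j) =
        1 / (lam i powr (1/2)) powr r * (1 / (lam j powr (1/2)) powr r)"
      by (simp add: powr_mult)
  qed (use lpos lnz in auto)
  have P6: "totally_nonnegative (mat n n (\<lambda>(i, j). 1 / binom_mean0 (lam i) (lam j) powr r))"
  proof (rule tn_rank1[where d="\<lambda>i. 1 / (lam i powr (1/2)) powr r" and e="\<lambda>i. 1 / (lam i powr (1/2)) powr r"])
    fix i j assume ij: "i < n" "j < n"
    have "binom_mean0 (lam i) (lam j) = lam i powr (1/2) * lam j powr (1/2)"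
      unfolding binom_mean0_def using lpos[OF ij(1)] lpos[OF ij(2)]
      by (simp add: powr_half_sqrt real_sqrt_mult)
    then show "(\<lambda>(i, j). 1 / binom_mean0 (lam i) (lam j) powr r) (i, j) =
        1 / (lam i powr (1/2)) powr r * (1 / (lam j powr (1/2)) powr r)"
      by (simp add: powr_mult)
  qed (use lpos lnz in auto)
  have P7: "totally_nonnegative (mat n n (\<lambda>(i, j). 1 / binom_mean_inf (lam i) (lam j) powr r))"
  proof (rule tn_max[where X="\<lambda>i. lam i powr r"])
    fix i j assume ij: "i < n" "j < n"
    have "max (lam i) (lam j) powr r = max (lam i powr r) (lam j powr r)"
    proof -
      have m1: "lam i powr r \<le> lam j powr r" if "lam i \<le> lam j"
        using lpos[OF ij(1)] r that by (intro powr_mono2) auto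
      have m2: "lam j powr r \<le> lam i powr r" if "lam j \<le> lam i"
        using lpos[OF ij(2)] r that by (intro powr_mono2) auto
      show ?thesis
      proof (cases "lam i \<le> lam j")
        case True
        then show ?thesis using m1 by (simp add: max_def)
      next
        case False
        then have "lam j powr r \<le> lam i powr r" using m2 by simp
        then show ?thesis using False by (auto simp: max_def intro: antisym)
      qed
    qed
    then show "(\<lambda>(i, j). 1 / binom_mean_inf (lam i) (lam j) powr r) (i, j) = 1 / max (lam i powr r) (lam j powr r)"
      by (simp add: binom_mean_inf_def)
  next
    fix i j assume "i < j" "j < n"
    then show "lam i powr r < lam j powr r"
      using incr lpos r by (intro powr_less_mono2) (auto intro: less_imp_le)
  qed (use lpos lnz in auto)
  show ?thesis using P1 P2 P3 P4 P5 P6 P7 by blast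
qed

end
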